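(* Let $H$ be a $3$-graph with $s$ vertices, let $t\geq 1$, and let $G$ be a $3$-graph that is $H\sqcup S_{2,t}$-free. Let $v\in V(G)$. If $G-\{v\}$ contains a copy of $H$, then $\omega(G_v)\leq s+t$.
   Context: A $3$-graph $G$ is $F$-free if it contains no subgraph isomorphic to $F$. $S_{2,t}$ is the $3$-graph with vertex set $\{w_1,w_2,u_1,\dots,u_t\}$ and edge set $\{w_1w_2u_1,\dots,w_1w_2u_t\}$. $\sqcup$ denotes vertex-disjoint union. For $S\subseteq V(G)$, $G-S$ is the subgraph of $G$ induced by $V(G)\setminus S$. The link graph of $v$ is the $2$-graph $G_v=\{ab: vab\in E(G)\}$, and $\omega(\cdot)$ denotes the order of a maximum clique of a $2$-graph. *)

theory Defs
  imports Main
begin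

definition hyper3 :: "'a set \<Rightarrow> 'a set set \<Rightarrow> bool" where
  "hyper3 V E \<longleftrightarrow> finite V \<and> (\<forall>e\<in>E. e \<subseteq> V \<and> card e = 3)"

definition contains_copy :: "'b set \<Rightarrow> 'b set set \<Rightarrow> 'a set \<Rightarrow> 'a set set \<Rightarrow> bool" where
  "contains_copy VF EF VG EG \<longleftrightarrow>
     (\<exists>f. inj_on f VF \<and> f ` VF \<subseteq> VG \<and> (\<forall>e\<in>EF. f ` e \<in> EG))"

text \<open>S_{2,t}: vertices 0 (= w1), 1 (= w2), 2..t+1 (= u_1..u_t); edges {0,1,k}.\<close>
definition S2_verts :: "nat \<Rightarrow> nat set" where
  "S2_verts t = {0..<t+2}"
definition S2_edges :: "nat \<Rightarrow> nat set set" where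
  "S2_edges t = {{0, 1, k} | k. 2 \<le> k \<and> k < t + 2}"

definition dunion_verts :: "'b set \<Rightarrow> 'c set \<Rightarrow> ('b + 'c) set" where
  "dunion_verts V1 V2 = Inl ` V1 \<union> Inr ` V2"
definition dunion_edges :: "'b set set \<Rightarrow> 'c set set \<Rightarrow> ('b + 'c) set set" where
  "dunion_edges E1 E2 = (image Inl) ` E1 \<union> (image Inr) ` E2"

definition link :: "'a set set \<Rightarrow> 'a \<Rightarrow> 'a set set" where
  "link E v = {{a, b} | a b. {v, a, b} \<in> E}"

definition clique2 :: "'a set set \<Rightarrow> 'a set \<Rightarrow> bool" where
  "clique2 L K \<longleftrightarrow> (\<forall>a\<in>K. \<forall>b\<in>K. a \<noteq> b \<longrightarrow> {a, b} \<in> L)"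

definition omega2 :: "'a set \<Rightarrow> 'a set set \<Rightarrow> nat" where
  "omega2 W L = Max {card K | K. K \<subseteq> W \<and> clique2 L K}"

end

theory Submission
  imports Defs
begin

lemma link_edge:
  assumes "{x, y} \<in> link E v" shows "{v, x, y} \<in> E"
proof -
  obtain a b where ab: "{x, y} = {a, b}" "{v, a, b} \<in> E"
    using assms unfolding link_def by blast
  have "{v, x, y} = {v, a, b}" using ab(1) by auto
  then show ?thesis using ab(2) by simp
qed

theorem claim3p5:
  fixes VH :: "'b set" and EH :: "'b set set"
    and VG :: "'a set" and EG :: "'a set set"
    and s t :: nat and v :: 'a
  assumes "hyper3 VH EH" and "card VH = s"
    and "t \<ge> 1"
    and "hyper3 VG EG"
    and "\<not> contains_copy (dunion_verts VH (S2_verts t)) (dunion_edges EH (S2_edges t)) VG EG"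
    and "v \<in> VG"
    and "contains_copy VH EH (VG - {v}) {e \<in> EG. v \<notin> e}"
  shows "omega2 (VG - {v}) (link EG v) \<le> s + t"
proof -
  have finH: "finite VH" using assms(1) unfolding hyper3_def by simp
  have finG: "finite VG" using assms(4) unfolding hyper3_def by simp
  obtain f where f: "inj_on f VH" "f ` VH \<subseteq> VG - {v}" "\<forall>e\<in>EH. f ` e \<in> {e \<in> EG. v \<notin> e}"
    using assms(7) unfolding contains_copy_def by blast
  have cardA: "card (f ` VH) = s" using f(1) assms(2) by (simp add: card_image)
  have bound: "card K \<le> s + t" if K: "K \<subseteq> VG - {v}" "clique2 (link EG v) K" for K
  proof (rule ccontr)
    assume "\<not> card K \<le> s + t"
    hence big: "card K > s + t" by simp
    have finK: "finite K" using K(1) finG finite_subset by blast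
    define B where "B = K - f ` VH"
    have "card K \<le> card B + card (f ` VH)"
      unfolding B_def by (metis Diff_partition card_Un_le sup_commute Un_Diff_cancel2 card_mono finK finite_Un finite_imageI finH sup.cobounded1 order_trans)
    hence "card B \<ge> t + 1" using big cardA by simp
    then obtain C where C: "C \<subseteq> B" "card C = t + 1"
      by (meson obtain_subset_with_card_n)
    have finC: "finite C" using C(1) finK unfolding B_def by (meson finite_Diff finite_subset)
    obtain h where h: "bij_betw h {0..<t+1} C"
      using ex_bij_betw_nat_finite[OF finC] C(2) by auto
    define F where "F = (\<lambda>z. case z of Inl x \<Rightarrow> f x | Inr k \<Rightarrow> (if k = 0 then v else h (k - 1)))"
    have hin: "h j \<in> C" if "j < t + 1" for j using h that unfolding bij_betw_def by auto
    have hinj: "h i = h j \<longleftrightarrow> i = j" if "i < t + 1" "j < t + 1" for i j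
      using h that unfolding bij_betw_def inj_on_def by auto
    have CK: "C \<subseteq> K" "C \<inter> f ` VH = {}" using C(1) unfolding B_def by auto
    have vC: "v \<notin> C" using CK K(1) by auto
    have "contains_copy (dunion_verts VH (S2_verts t)) (dunion_edges EH (S2_edges t)) VG EG"
      unfolding contains_copy_def
    proof (intro exI[of _ F] conjI)
      show "inj_on F (dunion_verts VH (S2_verts t))"
      proof (rule inj_onI)
        fix x y assume xy: "x \<in> dunion_verts VH (S2_verts t)" "y \<in> dunion_verts VH (S2_verts t)" "F x = F y"
        show "x = y"
        proof (cases x)
          case (Inl a)
          then have a: "a \<in> VH" using xy(1) unfolding dunion_verts_def by auto
          show ?thesis
          proof (cases y)
            case (Inl b)
            then have "b \<in> VH" using xy(2) unfolding dunion_verts_def by auto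
            then show ?thesis using Inl \<open>x = Inl a\<close> a xy(3) f(1) unfolding F_def inj_on_def by auto
          next
            case (Inr k)
            then have k: "k < t + 2" using xy(2) unfolding dunion_verts_def S2_verts_def by auto
            have fa: "f a \<in> f ` VH" "f a \<noteq> v" using a f(2) by auto
            show ?thesis
            proof (cases "k = 0")
              case True then show ?thesis using xy(3) Inr \<open>x = Inl a\<close> fa unfolding F_def by auto
            next
              case False
              then have "h (k - 1) \<in> C" using hin k by simp
              then show ?thesis using xy(3) Inr \<open>x = Inl a\<close> fa False CK(2) unfolding F_def by auto
            qed
          qed
        next
          case (Inr k)
          then have k: "k < t + 2" using xy(1) unfolding dunion_verts_def S2_verts_def by auto
          show ?thesis
          proof (cases y)
            case (Inl a)
            then have a: "a \<in> VH" using xy(2) unfolding dunion_verts_def by auto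
            have fa: "f a \<in> f ` VH" "f a \<noteq> v" using a f(2) by auto
            show ?thesis
            proof (cases "k = 0")
              case True then show ?thesis using xy(3) Inr \<open>y = Inl a\<close> fa unfolding F_def by auto
            next
              case False
              then have "h (k - 1) \<in> C" using hin k by simp
              then show ?thesis using xy(3) Inr \<open>y = Inl a\<close> fa False CK(2) unfolding F_def by auto
            qed
          next
            case (Inr l)
            then have l: "l < t + 2" using xy(2) unfolding dunion_verts_def S2_verts_def by auto
            have "k = l"
            proof (cases "k = 0"; cases "l = 0")
              assume "k \<noteq> 0" "l \<noteq> 0"
              then show "k = l" using xy(3) Inr \<open>x = Inr k\<close> hinj[of "k-1" "l-1"] k l unfolding F_def by (simp; arith)
            next
              assume "k = 0" "l \<noteq> 0"
              moreover have "h (l-1) \<in> C" using hin[of "l-1"] l \<open>l \<noteq> 0\<close> by simp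
              ultimately show "k = l" using xy(3) Inr \<open>x = Inr k\<close> vC unfolding F_def by auto
            next
              assume "k \<noteq> 0" "l = 0"
              moreover have "h (k-1) \<in> C" using hin[of "k-1"] k \<open>k \<noteq> 0\<close> by simp
              ultimately show "k = l" using xy(3) Inr \<open>x = Inr k\<close> vC unfolding F_def by auto
            qed simp
            then show ?thesis using Inr \<open>x = Inr k\<close> by simp
          qed
        qed
      qed
    next
      show "F ` dunion_verts VH (S2_verts t) \<subseteq> VG"
      proof
        fix y assume "y \<in> F ` dunion_verts VH (S2_verts t)"
        then obtain x where x: "x \<in> dunion_verts VH (S2_verts t)" "y = F x" by auto
        show "y \<in> VG"
        proof (cases x)
          case (Inl a) then show ?thesis using x f(2) unfolding dunion_verts_def F_def by auto
        next
          case (Inr k)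
          then have k: "k < t + 2" using x(1) unfolding dunion_verts_def S2_verts_def by auto
          show ?thesis
          proof (cases "k = 0")
            case True then show ?thesis using x Inr assms(6) unfolding F_def by auto
          next
            case False
            then have "h (k - 1) \<in> C" using hin k by simp
            then show ?thesis using x Inr False CK(1) K(1) unfolding F_def by auto
          qed
        qed
      qed
    next
      show "\<forall>e\<in>dunion_edges EH (S2_edges t). F ` e \<in> EG"
      proof
        fix e assume "e \<in> dunion_edges EH (S2_edges t)"
        then consider (L) e' where "e' \<in> EH" "e = Inl ` e'" | (R) e' where "e' \<in> S2_edges t" "e = Inr ` e'"
          unfolding dunion_edges_def by auto
        then show "F ` e \<in> EG"
        proof cases
          case L
          have "F ` e = f ` e'" using L unfolding F_def by (auto simp: image_image)
          then show ?thesis using L f(3) by auto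
        next
          case R
          then obtain k where k: "2 \<le> k" "k < t + 2" "e' = {0, 1, k}" unfolding S2_edges_def by auto
          have Fe: "F ` e = {v, h 0, h (k - 1)}" using R k unfolding F_def by auto
          have "h 0 \<in> K" "h (k - 1) \<in> K" using hin k CK(1) by auto
          moreover have "h 0 \<noteq> h (k - 1)" using hinj[of 0 "k-1"] k by auto
          ultimately have "{h 0, h (k - 1)} \<in> link EG v" using K(2) unfolding clique2_def by blast
          then show ?thesis using Fe link_edge by metis
        qed
      qed
    qed
    then show False using assms(5) by simp
  qed
  have fin: "finite {card K | K. K \<subseteq> VG - {v} \<and> clique2 (link EG v) K}"
  proof -
    have "{card K | K. K \<subseteq> VG - {v} \<and> clique2 (link EG v) K} \<subseteq> card ` Pow VG" by auto
    then show ?thesis using finG finite_subset by blast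
  qed
  have ne: "{card K | K. K \<subseteq> VG - {v} \<and> clique2 (link EG v) K} \<noteq> {}"
  proof -
    have "card {} \<in> {card K | K. K \<subseteq> VG - {v} \<and> clique2 (link EG v) K}"
      unfolding clique2_def by (rule CollectI, rule exI[of _ "{}"]) simp
    then show ?thesis by blast
  qed
  show ?thesis unfolding omega2_def using fin ne bound by (auto simp: Max_le_iff)
qed

end
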